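(* Let $G=(V,E)$ be a finite simple strongly connected directed graph with a fixed total order on $V$, let $W\subseteq V$ be strongly connected and $w\in W$. For each spanning tree $\mathbf b$ rooted at $w$ with $\psi(\mathbf b)=W$, define the formal signed combination of forests rooted in $W$ $$\nu_{\mathbf b}=\sum_{\mathfrak F\subseteq\mathfrak E_{\mathbf b}}(-1)^{|\mathfrak F|}\,\delta_{\mathbf f_{\mathfrak F}},$$ with $\mathfrak E_{\mathbf b}$ and $\mathbf f_{\mathfrak F}$ as below. Then the family $(\nu_{\mathbf b})$, indexed by all spanning trees $\mathbf b$ rooted at $w$ with $\psi(\mathbf b)=W$, is linearly independent in the vector space with basis $\{\delta_{\mathbf f}\}$ indexed by forests of $G$ rooted in $W$.
   Context: A spanning tree of $G$ is a subgraph on all vertices with no cycle, one vertex (root) of outdegree $0$ and all others of outdegree $1$. For nonempty $U\subseteq V$, a forest rooted in $U$ is a subgraph on all vertices with no cycle in which vertices of $U$ have outdegree $0$ and all others outdegree $1$. Exploration algorithm (depends on the fixed total order of $V$). Input: a spanning tree $\mathbf a$ rooted at $v$. Initialize $A=\{v\}$, $F=\{e: s(e)\neq v\}$, $\mathbf L$ = FIFO list of edges with target $v$, by increasing source. While $\mathbf L$ is nonempty, take its first edge $e$, with source $u$: if $e\in\mathbf a$, add $u$ to $A$, delete from $\mathbf L$ (and $F$) all edges with source $u$, and append to $\mathbf L$ all edges of $F$ with target $u$ by increasing source; otherwise delete from $\mathbf L$ and $F$ all edges with source or target $u$, and $u$ is said to be erased by the edge $e$. At the end $\phi(\mathbf a)=A$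 and $\psi(\mathbf a)$ is the strongly connected component of $v$ in the induced graph $G_{\phi(\mathbf a)}$. For a tree $\mathbf b$ as in the claim: $\mathbf f$ is the set of edges of $\mathbf b$ whose source is not in $W$; $\mathfrak E_{\mathbf b}$ is the set of vertices erased when running the algorithm on $\mathbf b$; for $u\in\mathfrak E_{\mathbf b}$, $e(u)$ is the edge that erased $u$; for $\mathfrak F\subseteq\mathfrak E_{\mathbf b}$, $\mathbf f_{\mathfrak F}$ is obtained from $\mathbf f$ by replacing, for each $u\in\mathfrak F$, the edge of $\mathbf f$ going out of $u$ by $e(u)$ (it is a forest rooted in $W$). *)

theory Defs
  imports Complex_Main "HOL-Library.While_Combinator"
begin

(* Directed graphs: vertex set V (finite, ordered by the linorder on 'a),
   edge set E \<subseteq> V \<times> V; an edge e has source fst e and target snd e. *)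

definition simple_digraph :: "'a set \<Rightarrow> ('a \<times> 'a) set \<Rightarrow> bool" where
  "simple_digraph V E \<longleftrightarrow> finite V \<and> E \<subseteq> V \<times> V \<and> (\<forall>x. (x, x) \<notin> E)"

definition strongly_connected_set :: "('a \<times> 'a) set \<Rightarrow> 'a set \<Rightarrow> bool" where
  "strongly_connected_set E U \<longleftrightarrow> (\<forall>x\<in>U. \<forall>y\<in>U. (x, y) \<in> (E \<inter> U \<times> U)\<^sup>*)"

definition forest_rooted :: "'a set \<Rightarrow> ('a \<times> 'a) set \<Rightarrow> 'a set \<Rightarrow> ('a \<times> 'a) set \<Rightarrow> bool" where
  "forest_rooted V E U a \<longleftrightarrow> a \<subseteq> E \<and> acyclic a
     \<and> (\<forall>u\<in>U. \<forall>y. (u, y) \<notin> a)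
     \<and> (\<forall>x\<in>V - U. \<exists>!y. (x, y) \<in> a)"

definition spanning_tree :: "'a set \<Rightarrow> ('a \<times> 'a) set \<Rightarrow> 'a \<Rightarrow> ('a \<times> 'a) set \<Rightarrow> bool" where
  "spanning_tree V E v a \<longleftrightarrow> forest_rooted V E {v} a"

(* Exploration algorithm.  State: (A, F, L, Er) where Er is the set of edges
   that erased a vertex (the erased vertex is the source of such an edge). *)
type_synonym 'a expl_state = "'a set \<times> ('a \<times> 'a) set \<times> ('a \<times> 'a) list \<times> ('a \<times> 'a) set"

definition in_edges_sorted :: "('a::linorder \<times> 'a) set \<Rightarrow> 'a \<Rightarrow> ('a \<times> 'a) list" where
  "in_edges_sorted F u = map (\<lambda>s. (s, u)) (sorted_list_of_set {s. (s, u) \<in> F})"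

definition expl_init :: "('a::linorder \<times> 'a) set \<Rightarrow> 'a \<Rightarrow> 'a expl_state" where
  "expl_init E v = ({v}, {e\<in>E. fst e \<noteq> v}, in_edges_sorted E v, {})"

definition expl_step :: "('a::linorder \<times> 'a) set \<Rightarrow> 'a expl_state \<Rightarrow> 'a expl_state" where
  "expl_step a st = (case st of (A, F, L, Er) \<Rightarrow>
     (let e = hd L; u = fst e in
      if e \<in> a then
        (let F' = {e'\<in>F. fst e' \<noteq> u} in
         (insert u A, F', filter (\<lambda>e'. fst e' \<noteq> u) (tl L) @ in_edges_sorted F' u, Er))
      else
        (A, {e'\<in>F. fst e' \<noteq> u \<and> snd e' \<noteq> u},
         filter (\<lambda>e'. fst e' \<noteq> u \<and> snd e' \<noteq> u) (tl L), insert e Er)))"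

definition expl_run :: "('a::linorder \<times> 'a) set \<Rightarrow> 'a \<Rightarrow> ('a \<times> 'a) set \<Rightarrow> 'a expl_state" where
  "expl_run E v a = the (while_option (\<lambda>(A, F, L, Er). L \<noteq> []) (expl_step a) (expl_init E v))"

definition phi :: "('a::linorder \<times> 'a) set \<Rightarrow> 'a \<Rightarrow> ('a \<times> 'a) set \<Rightarrow> 'a set" where
  "phi E v a = fst (expl_run E v a)"

definition psi :: "('a::linorder \<times> 'a) set \<Rightarrow> 'a \<Rightarrow> ('a \<times> 'a) set \<Rightarrow> 'a set" where
  "psi E v a = (let A = phi E v a; EA = E \<inter> A \<times> A in
      {x\<in>A. (v, x) \<in> EA\<^sup>* \<and> (x, v) \<in> EA\<^sup>*})"

definition erasing_edges :: "('a::linorder \<times> 'a) set \<Rightarrow> 'a \<Rightarrow> ('a \<times> 'a) set \<Rightarrow> ('a \<times> 'a) set" where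
  "erasing_edges E v a = snd (snd (snd (expl_run E v a)))"

definition erased :: "('a::linorder \<times> 'a) set \<Rightarrow> 'a \<Rightarrow> ('a \<times> 'a) set \<Rightarrow> 'a set" where
  "erased E v a = fst ` erasing_edges E v a"

(* f_\<FF>: edges of b with source outside W, the edge out of each u \<in> \<FF>
   being replaced by e(u) *)
definition f_mod :: "('a::linorder \<times> 'a) set \<Rightarrow> 'a \<Rightarrow> 'a set \<Rightarrow> ('a \<times> 'a) set \<Rightarrow> 'a set \<Rightarrow> ('a \<times> 'a) set" where
  "f_mod E w W b FF = {e\<in>b. fst e \<notin> W \<and> fst e \<notin> FF} \<union> {e\<in>erasing_edges E w b. fst e \<in> FF}"

(* nu_b as a (finitely supported) function from edge sets to coefficients:
   nu_b = \<Sum>_{\<FF> \<subseteq> erased} (-1)^|\<FF>| \<delta>_{f_\<FF>} *)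
definition nu :: "('a::linorder \<times> 'a) set \<Rightarrow> 'a \<Rightarrow> 'a set \<Rightarrow> ('a \<times> 'a) set \<Rightarrow> ('a \<times> 'a) set \<Rightarrow> real" where
  "nu E w W b f = (\<Sum>FF\<in>Pow (erased E w b). (-1) ^ card FF * (if f_mod E w W b FF = f then 1 else 0))"

end

theory Submission
  imports Defs
begin

definition "sA s = fst s"
definition "sF s = fst (snd s)"
definition "sL s = fst (snd (snd s))"
definition "sEr s = snd (snd (snd s))"
lemma sel_simps[simp]: "sA (A,F,L,Er) = A" "sF (A,F,L,Er) = F" "sL (A,F,L,Er) = L" "sEr (A,F,L,Er) = Er"
  by (simp_all add: sA_def sF_def sL_def sEr_def)

definition inv :: "('a \<times> 'a) set \<Rightarrow> ('a \<times> 'a) set \<Rightarrow> 'a expl_state \<Rightarrow> bool" where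
  "inv E a s \<longleftrightarrow> sF s \<subseteq> E \<and> set (sL s) \<subseteq> sF s \<and> (\<forall>e\<in>sF s. fst e \<notin> sA s \<and> fst e \<notin> fst ` sEr s)
     \<and> sA s \<inter> fst ` sEr s = {} \<and> sEr s \<subseteq> E \<and> sEr s \<inter> a = {}"

lemma set_in_edges: "finite F \<Longrightarrow> set (in_edges_sorted F u) = {e\<in>F. snd e = u}"
proof -
  assume "finite F"
  hence "finite {s. (s,u) \<in> F}" by (rule finite_subset[rotated, OF finite_imageI[of F fst]]) force
  thus ?thesis unfolding in_edges_sorted_def by auto
qed

lemma step_props:
  fixes a :: "('a::linorder \<times> 'a) set"
  assumes I: "inv E a s" and fin: "finite E" and ne: "sL s \<noteq> []"
  shows "inv E a (expl_step a s) \<and> card (sF (expl_step a s)) < card (sF s)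
    \<and> sA s \<subseteq> sA (expl_step a s) \<and> sEr s \<subseteq> sEr (expl_step a s)
    \<and> (hd (sL s) \<in> a \<longrightarrow> fst (hd (sL s)) \<in> sA (expl_step a s))
    \<and> (hd (sL s) \<notin> a \<longrightarrow> hd (sL s) \<in> sEr (expl_step a s))
    \<and> (\<forall>x\<in>sA (expl_step a s). x \<in> sA s \<or> (x = fst (hd (sL s)) \<and> hd (sL s) \<in> a))"
proof -
  obtain A F L Er where s: "s = (A,F,L,Er)" by (cases s) auto
  let ?e = "hd L" let ?u = "fst (hd L)"
  have eL: "?e \<in> set L" using ne s by simp
  have FE: "F \<subseteq> E" and LF: "set L \<subseteq> F" and FA: "\<forall>e\<in>F. fst e \<notin> A \<and> fst e \<notin> fst ` Er"
    and AEr: "A \<inter> fst ` Er = {}" and ErE: "Er \<subseteq> E" and Era: "Er \<inter> a = {}"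
    using I s unfolding inv_def by auto
  have eF: "?e \<in> F" using eL LF by auto
  have finF: "finite F" using FE fin finite_subset by blast
  show ?thesis
  proof (cases "?e \<in> a")
    case True
    let ?F' = "{e'\<in>F. fst e' \<noteq> ?u}"
    have st: "expl_step a s = (insert ?u A, ?F', filter (\<lambda>e'. fst e' \<noteq> ?u) (tl L) @ in_edges_sorted ?F' ?u, Er)"
      using True s by (simp add: expl_step_def Let_def)
    have finF': "finite ?F'" using finF by auto
    have sub: "?F' \<subset> F" using eF by auto
    have c: "card ?F' < card F" using psubset_card_mono[OF finF sub] .
    have tlL: "set (tl L) \<subseteq> set L" by (cases L) auto
    have "inv E a (expl_step a s)" unfolding st inv_def using FE LF FA AEr ErE Era eF tlL
      by (auto simp: set_in_edges[OF finF'])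
    then show ?thesis using st c True s FA eF by auto
  next
    case False
    let ?F' = "{e'\<in>F. fst e' \<noteq> ?u \<and> snd e' \<noteq> ?u}"
    have st: "expl_step a s = (A, ?F', filter (\<lambda>e'. fst e' \<noteq> ?u \<and> snd e' \<noteq> ?u) (tl L), insert ?e Er)"
      using False s by (simp add: expl_step_def Let_def)
    have sub: "?F' \<subset> F" using eF by auto
    have c: "card ?F' < card F" using psubset_card_mono[OF finF sub] .
    have tlL: "set (tl L) \<subseteq> set L" by (cases L) auto
    have "inv E a (expl_step a s)" unfolding st inv_def using FE LF FA AEr ErE Era eF tlL False
      by auto
    then show ?thesis using st c False s by auto
  qed
qed

lemma init_inv:
  assumes fin: "finite E" and nl: "\<forall>x. (x,x) \<notin> E"
  shows "inv E a (expl_init E w)"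
  unfolding inv_def expl_init_def using nl by (auto simp: set_in_edges[OF fin])

lemma step_cong: "(hd (sL s) \<in> a) = (hd (sL s) \<in> b) \<Longrightarrow> expl_step a s = expl_step b s"
  by (cases s) (simp add: expl_step_def Let_def)

definition stt :: "('a::linorder \<times> 'a) set \<Rightarrow> 'a \<Rightarrow> ('a \<times> 'a) set \<Rightarrow> nat \<Rightarrow> 'a expl_state" where
  "stt E v a n = (expl_step a ^^ n) (expl_init E v)"
definition Kt :: "('a::linorder \<times> 'a) set \<Rightarrow> 'a \<Rightarrow> ('a \<times> 'a) set \<Rightarrow> nat" where
  "Kt E v a = (LEAST k. sL (stt E v a k) = [])"

lemma stt_Suc: "stt E v a (Suc n) = expl_step a (stt E v a n)"
  by (simp add: stt_def)
lemma stt_0: "stt E v a 0 = expl_init E v"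
  by (simp add: stt_def)

context
  fixes E :: "('a::linorder \<times> 'a) set" and v :: 'a
  assumes finE: "finite E" and nl: "\<forall>x. (x,x) \<notin> E"
begin

lemma inv_upto: "(\<forall>i<n. sL (stt E v a i) \<noteq> []) \<Longrightarrow> inv E a (stt E v a n) \<and> card (sF (stt E v a n)) + n \<le> card (sF (stt E v a 0))"
proof (induction n)
  case 0 then show ?case using init_inv[OF finE nl] by (simp add: stt_0)
next
  case (Suc n)
  then have IH: "inv E a (stt E v a n)" "card (sF (stt E v a n)) + n \<le> card (sF (stt E v a 0))" by auto
  have "sL (stt E v a n) \<noteq> []" using Suc.prems by auto
  from step_props[OF IH(1) finE this] IH(2) show ?case by (simp add: stt_Suc)
qed

lemma term_ex: "\<exists>k. sL (stt E v a k) = []"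
proof (rule ccontr)
  assume "\<not> ?thesis"
  then have "\<forall>i<Suc (card (sF (stt E v a 0))). sL (stt E v a i) \<noteq> []" by auto
  from inv_upto[OF this] show False by simp
qed

lemma K_stop: "sL (stt E v a (Kt E v a)) = []"
  unfolding Kt_def using term_ex by (rule LeastI_ex)

lemma K_before: "i < Kt E v a \<Longrightarrow> sL (stt E v a i) \<noteq> []"
  unfolding Kt_def by (rule not_less_Least)

lemma inv_K: "i \<le> Kt E v a \<Longrightarrow> inv E a (stt E v a i)"
  using inv_upto[of i a] K_before by auto

lemma cond_eq: "(case s of (A, F, L, Er) \<Rightarrow> L \<noteq> []) = (sL s \<noteq> [])"
  by (cases s) simp

lemma run_eq: "expl_run E v a = stt E v a (Kt E v a)"
proof -
  have c: "(\<lambda>(A, F, L, Er). L \<noteq> []) = (\<lambda>s. sL s \<noteq> [])" using cond_eq by (auto simp: fun_eq_iff)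
  show ?thesis using term_ex[of a] unfolding expl_run_def while_option_def c Kt_def stt_def by auto
qed

lemma mono_K: "i \<le> j \<Longrightarrow> j \<le> Kt E v a \<Longrightarrow> sA (stt E v a i) \<subseteq> sA (stt E v a j) \<and> sEr (stt E v a i) \<subseteq> sEr (stt E v a j)"
proof (induction j)
  case 0 then show ?case by simp
next
  case (Suc j)
  show ?case
  proof (cases "i = Suc j")
    case True then show ?thesis by simp
  next
    case False
    then have ij: "i \<le> j" "j < Kt E v a" using Suc.prems by auto
    have "inv E a (stt E v a j)" using inv_K ij by simp
    from step_props[OF this finE K_before[OF ij(2)]] Suc.IH ij show ?thesis by (auto simp: stt_Suc)
  qed
qed

lemma accept_K: "n \<le> Kt E v a \<Longrightarrow> x \<in> sA (stt E v a n) \<Longrightarrow> x = v \<or> (\<exists>i<n. fst (hd (sL (stt E v a i))) = x \<and> hd (sL (stt E v a i)) \<in> a)"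
proof (induction n)
  case 0 then show ?case by (simp add: stt_0 expl_init_def)
next
  case (Suc n)
  have n: "n < Kt E v a" using Suc.prems by simp
  have "inv E a (stt E v a n)" using inv_K n by simp
  from step_props[OF this finE K_before[OF n]] Suc.prems(2) have
    "x \<in> sA (stt E v a n) \<or> (x = fst (hd (sL (stt E v a n))) \<and> hd (sL (stt E v a n)) \<in> a)"
    by (auto simp: stt_Suc)
  then show ?case using Suc.IH n less_Suc_eq by fastforce
qed

end

lemma agree: "(\<forall>i<n. (hd (sL (stt E v b i)) \<in> b) = (hd (sL (stt E v b' i)) \<in> b')) \<Longrightarrow> stt E v b n = stt E v b' n"
proof (induction n)
  case 0 then show ?case by (simp add: stt_0)
next
  case (Suc n)
  then have eq: "stt E v b n = stt E v b' n" by simp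
  have "(hd (sL (stt E v b n)) \<in> b) = (hd (sL (stt E v b n)) \<in> b')" using Suc.prems eq by auto
  then show ?case using eq step_cong by (metis stt_Suc)
qed

definition dec :: "('a::linorder \<times> 'a) set \<Rightarrow> 'a \<Rightarrow> ('a \<times> 'a) set \<Rightarrow> nat \<Rightarrow> bool" where
  "dec E v a i = (hd (sL (stt E v a i)) \<in> a)"
definition ltr :: "('a::linorder \<times> 'a) set \<Rightarrow> 'a \<Rightarrow> ('a \<times> 'a) set \<Rightarrow> ('a \<times> 'a) set \<Rightarrow> bool" where
  "ltr E v b b' = (\<exists>n. (\<forall>i<n. dec E v b i = dec E v b' i) \<and> \<not> dec E v b n \<and> dec E v b' n)"

lemma ltr_irrefl: "\<not> ltr E v b b"
  unfolding ltr_def by auto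

lemma ltr_trans: "ltr E v x y \<Longrightarrow> ltr E v y z \<Longrightarrow> ltr E v x z"
proof -
  assume "ltr E v x y" "ltr E v y z"
  then obtain n m where n: "\<forall>i<n. dec E v x i = dec E v y i" "\<not> dec E v x n" "dec E v y n"
    and m: "\<forall>i<m. dec E v y i = dec E v z i" "\<not> dec E v y m" "dec E v z m"
    unfolding ltr_def by blast
  consider "n < m" | "m < n" | "n = m" by linarith
  then show ?thesis
  proof cases
    case 1 then show ?thesis unfolding ltr_def using n m by (intro exI[of _ n]) auto
  next
    case 2 then show ?thesis unfolding ltr_def using n m by (intro exI[of _ m]) auto
  next
    case 3 then show ?thesis using n m by simp
  qed
qed

context
  fixes E :: "('a::linorder \<times> 'a) set" and v :: 'a
  assumes finE: "finite E" and nl: "\<forall>x. (x,x) \<notin> E"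
begin

lemma phi_eq: "phi E v a = sA (stt E v a (Kt E v a))"
  unfolding phi_def run_eq[OF finE nl] by (simp add: sA_def)
lemma er_eq: "erasing_edges E v a = sEr (stt E v a (Kt E v a))"
  unfolding erasing_edges_def run_eq[OF finE nl] by (simp add: sEr_def)
lemma psi_sub: "psi E v a \<subseteq> phi E v a"
  unfolding psi_def Let_def by auto

lemma key:
  assumes tb: "spanning_tree V E v b" and tb': "spanning_tree V E v b'"
    and pb: "psi E v b = W" and pb': "psi E v b' = W" and WV: "W \<subseteq> V"
    and FF: "FF \<subseteq> erased E v b" and eq: "f_mod E v W b' {} = f_mod E v W b FF"
  shows "ltr E v b b' \<or> (FF = {} \<and> b = b')"
proof -
  define K where "K = Kt E v b"
  define K' where "K' = Kt E v b'"
  have root: "\<And>y. (v, y) \<notin> b" "\<And>y. (v, y) \<notin> b'" using tb tb'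
    unfolding spanning_tree_def forest_rooted_def by auto
  have uniq: "\<And>x. x \<in> V - {v} \<Longrightarrow> \<exists>!y. (x, y) \<in> b" "\<And>x. x \<in> V - {v} \<Longrightarrow> \<exists>!y. (x, y) \<in> b'"
    using tb tb' unfolding spanning_tree_def forest_rooted_def by auto
  have invK: "inv E b (stt E v b K)" "inv E b' (stt E v b' K')"
    using inv_K[OF finE nl, where v=v] unfolding K_def K'_def by auto
  have Wphi: "W \<subseteq> sA (stt E v b K)" "W \<subseteq> sA (stt E v b' K')"
    using psi_sub[of b] psi_sub[of b'] pb pb' phi_eq unfolding K_def K'_def by auto
  have fmsub: "f_mod E v W b' {} \<subseteq> b'" unfolding f_mod_def by auto
  show ?thesis
  proof (cases "\<forall>i<K. dec E v b i = dec E v b' i")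
    case True
    have agr: "\<And>j. j \<le> K \<Longrightarrow> stt E v b j = stt E v b' j"
      using True by (intro agree) (auto simp: dec_def)
    have KK: "K' = K"
      unfolding K'_def Kt_def
    proof (rule Least_equality)
      show "sL (stt E v b' K) = []" using K_stop[OF finE nl, where a=b and v=v] agr[of K] unfolding K_def by simp
      fix k assume "sL (stt E v b' k) = []"
      then show "K \<le> k" using K_before[OF finE nl, where i=k and a=b and v=v] agr[of k] unfolding K_def by force
    qed
    have same: "stt E v b' K' = stt E v b K" using agr[of K] KK by simp
    have FFe: "FF = {}"
    proof (rule ccontr)
      assume "FF \<noteq> {}"
      then obtain u where "u \<in> FF" by auto
      then obtain e where e: "e \<in> sEr (stt E v b K)" "fst e = u"
        using FF unfolding erased_def er_eq K_def by auto
      have "e \<in> f_mod E v W b FF" using e \<open>u \<in> FF\<close> unfolding f_mod_def er_eq K_def by auto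
      then have "e \<in> b'" using eq fmsub by auto
      moreover have "e \<in> sEr (stt E v b' K')" using e same by simp
      ultimately show False using invK(2) unfolding inv_def by auto
    qed
    have Wedge: "(x, y) \<in> b \<longleftrightarrow> (x, y) \<in> b'" if xW: "x \<in> W" for x y
    proof (cases "x = v")
      case True then show ?thesis using root by simp
    next
      case xv: False
      have xA: "x \<in> sA (stt E v b K)" using xW Wphi by auto
      obtain i where i: "i < K" "fst (hd (sL (stt E v b i))) = x" "hd (sL (stt E v b i)) \<in> b"
        using accept_K[OF finE nl, where n=K and a=b and x=x and v=v] xA xv unfolding K_def by auto
      have "hd (sL (stt E v b' i)) \<in> b'" using True i(1,3) unfolding dec_def by auto
      then have i3: "hd (sL (stt E v b i)) \<in> b'" using agr[of i] i(1) by simp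
      obtain y0 where y0: "hd (sL (stt E v b i)) = (x, y0)" using i(2) by (cases "hd (sL (stt E v b i))") auto
      have xV: "x \<in> V - {v}" using xW WV xv by auto
      show ?thesis using uniq[OF xV] i(3) i3 y0 by metis
    qed
    have "b = b'"
    proof (intro set_eqI)
      fix e :: "'a \<times> 'a"
      obtain x y where e: "e = (x, y)" by (cases e)
      show "e \<in> b \<longleftrightarrow> e \<in> b'"
      proof (cases "x \<in> W")
        case True then show ?thesis using Wedge e by simp
      next
        case False
        have "e \<in> f_mod E v W b {} \<longleftrightarrow> e \<in> f_mod E v W b' {}" using eq FFe by simp
        then show ?thesis using False e unfolding f_mod_def by auto
      qed
    qed
    then show ?thesis using FFe by simp
  next
    case False
    then obtain n0 where n0: "n0 < K \<and> dec E v b n0 \<noteq> dec E v b' n0" by auto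
    define n where "n = (LEAST n. n < K \<and> dec E v b n \<noteq> dec E v b' n)"
    have n: "n < K" "dec E v b n \<noteq> dec E v b' n"
      using LeastI[of "\<lambda>n. n < K \<and> dec E v b n \<noteq> dec E v b' n", OF n0] unfolding n_def by auto
    have before: "\<forall>i<n. dec E v b i = dec E v b' i"
    proof (intro allI impI)
      fix i assume "i < n"
      then have "\<not> (i < K \<and> dec E v b i \<noteq> dec E v b' i)" unfolding n_def by (rule not_less_Least)
      then show "dec E v b i = dec E v b' i" using \<open>i < n\<close> n(1) by auto
    qed
    have agr: "\<And>j. j \<le> n \<Longrightarrow> stt E v b j = stt E v b' j"
      using before by (intro agree) (auto simp: dec_def)
    have nK': "n < K'"
    proof (rule ccontr)
      assume "\<not> n < K'"
      then have "K' \<le> n" by simp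
      then have "sL (stt E v b K') = []" using agr[of K'] K_stop[OF finE nl, where a=b' and v=v] unfolding K'_def by simp
      moreover have "K' < K" using \<open>K' \<le> n\<close> n(1) by simp
      ultimately show False using K_before[OF finE nl, where i=K' and a=b and v=v] unfolding K_def by simp
    qed
    show ?thesis
    proof (cases "dec E v b n")
      case False
      then show ?thesis using n before unfolding ltr_def by auto
    next
      case True
      define e where "e = hd (sL (stt E v b n))"
      have eb: "e \<in> b" using True unfolding dec_def e_def by simp
      have eb': "e \<notin> b'" using True n(2) agr[of n] unfolding dec_def e_def by simp
      have ne: "sL (stt E v b n) \<noteq> []" using K_before[OF finE nl, where i=n and a=b and v=v] n(1) unfolding K_def by simp
      have ne': "sL (stt E v b' n) \<noteq> []" using ne agr[of n] by simp
      have i1: "inv E b (stt E v b n)" using inv_K[OF finE nl, where v=v and a=b and i=n] n(1) unfolding K_def by simp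
      have i2: "inv E b' (stt E v b' n)" using inv_K[OF finE nl, where v=v and a=b' and i=n] nK' unfolding K'_def by simp
      have "e \<in> sEr (stt E v b' (Suc n))"
        using step_props[OF i2 finE ne'] eb' agr[of n] unfolding e_def by (simp add: stt_Suc)
      moreover have "sEr (stt E v b' (Suc n)) \<subseteq> sEr (stt E v b' K')"
        using mono_K[OF finE nl, where v=v and a=b' and i="Suc n" and j=K'] nK' unfolding K'_def by simp
      ultimately have "e \<in> sEr (stt E v b' K')" by auto
      then have "fst e \<notin> sA (stt E v b' K')" using invK(2) unfolding inv_def by blast
      then have uW: "fst e \<notin> W" using Wphi(2) by auto
      have "fst e \<in> sA (stt E v b (Suc n))"
        using step_props[OF i1 finE ne] eb unfolding e_def by (simp add: stt_Suc)
      moreover have "sA (stt E v b (Suc n)) \<subseteq> sA (stt E v b K)"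
        using mono_K[OF finE nl, where v=v and a=b and i="Suc n" and j=K] n(1) unfolding K_def by simp
      ultimately have "fst e \<notin> fst ` sEr (stt E v b K)" using invK(1) unfolding inv_def by auto
      then have "fst e \<notin> FF" using FF unfolding erased_def er_eq K_def by auto
      then have "e \<in> f_mod E v W b FF" using eb uW unfolding f_mod_def by auto
      then have "e \<in> b'" using eq fmsub by auto
      then show ?thesis using eb' by simp
    qed
  qed
qed

end

theorem lemma4p5:
  fixes V :: "'a::linorder set" and E :: "('a \<times> 'a) set" and W :: "'a set" and w :: 'a
  assumes "simple_digraph V E"
    and "strongly_connected_set E V"
    and "W \<subseteq> V" and "strongly_connected_set E W" and "w \<in> W"
  shows "\<forall>c :: ('a \<times> 'a) set \<Rightarrow> real.
           (\<forall>f. (\<Sum>b\<in>{b. spanning_tree V E w b \<and> psi E w b = W}. c b * nu E w W b f) = 0)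
           \<longrightarrow> (\<forall>b\<in>{b. spanning_tree V E w b \<and> psi E w b = W}. c b = 0)"
proof (intro allI impI ballI)
  fix c :: "('a \<times> 'a) set \<Rightarrow> real" and b0
  define T where "T = {b. spanning_tree V E w b \<and> psi E w b = W}"
  assume H: "\<forall>f. (\<Sum>b\<in>{b. spanning_tree V E w b \<and> psi E w b = W}. c b * nu E w W b f) = 0"
    and b0: "b0 \<in> {b. spanning_tree V E w b \<and> psi E w b = W}"
  have finE: "finite E" using assms(1) unfolding simple_digraph_def
    by (meson finite_SigmaI finite_subset)
  have nl: "\<forall>x. (x, x) \<notin> E" using assms(1) unfolding simple_digraph_def by auto
  have WV: "W \<subseteq> V" by fact
  have finT: "finite T"
  proof (rule finite_subset[of _ "Pow E"])
    have "b \<subseteq> E" if "spanning_tree V E w b" for b using that unfolding spanning_tree_def forest_rooted_def by (elim conjE)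
    then show "T \<subseteq> Pow E" unfolding T_def by auto
  qed (use finE in simp)
  show "c b0 = 0"
  proof (rule ccontr)
    assume c0: "c b0 \<noteq> 0"
    define S where "S = {b\<in>T. c b \<noteq> 0}"
    define R where "R = {(x, y). x \<in> S \<and> y \<in> S \<and> ltr E w x y}"
    have finS: "finite S" using finT unfolding S_def by simp
    have RS: "R \<subseteq> S \<times> S" unfolding R_def by auto
    have finR: "finite R" using finite_subset[OF RS] finS by simp
    have trR: "trans R"
    proof (rule transI)
      fix x y z assume "(x, y) \<in> R" "(y, z) \<in> R"
      then have "x \<in> S" "z \<in> S" "ltr E w x y" "ltr E w y z" unfolding R_def by auto
      then show "(x, z) \<in> R" unfolding R_def using ltr_trans[of E w x y z] by simp
    qed
    have irR: "\<forall>x. (x, x) \<notin> R" unfolding R_def using ltr_irrefl by blast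
    have acR: "acyclic R" unfolding acyclic_def trancl_id[OF trR] using irR .
    have wfR: "wf R" using finite_acyclic_wf[OF finR acR] .
    have b0S: "b0 \<in> S" using b0 c0 unfolding S_def T_def by simp
    obtain b where bS: "b \<in> S" and bmin: "\<And>y. (y, b) \<in> R \<Longrightarrow> y \<notin> S"
      using wfE_min[OF wfR b0S] by blast
    have bT: "b \<in> T" and cb: "c b \<noteq> 0" using bS unfolding S_def by simp_all
    have minb: "\<not> ltr E w y b" if yS: "y \<in> S" for y
    proof
      assume "ltr E w y b"
      then have "(y, b) \<in> R" unfolding R_def using yS bS by simp
      then show False using bmin yS by blast
    qed
    define f0 where "f0 = f_mod E w W b {}"
    have keyT: "ltr E w b1 b2 \<or> (FF = {} \<and> b1 = b2)"
      if "b1 \<in> T" "b2 \<in> T" "FF \<subseteq> erased E w b1" "f_mod E w W b2 {} = f_mod E w W b1 FF" for b1 b2 FF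
      using key[OF finE nl, where v=w and V=V and W=W and b=b1 and b'=b2 and FF=FF] that WV
      unfolding T_def by blast
    have finEr: "finite (erased E w a)" for a
    proof -
      have "inv E a (stt E w a (Kt E w a))" using inv_K[OF finE nl, where v=w and a=a] by simp
      then have "erasing_edges E w a \<subseteq> E" unfolding er_eq[OF finE nl] inv_def by simp
      then show ?thesis unfolding erased_def using finE finite_subset by blast
    qed
    have other: "c b' * nu E w W b' f0 = 0" if "b' \<in> T" "b' \<noteq> b" for b'
    proof (cases "c b' = 0")
      case False
      then have "b' \<in> S" using that unfolding S_def by auto
      then have nl': "\<not> ltr E w b' b" using minb by blast
      have "nu E w W b' f0 = 0" unfolding nu_def
      proof (rule sum.neutral, intro ballI)
        fix FF assume "FF \<in> Pow (erased E w b')"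
        then show "(-1) ^ card FF * (if f_mod E w W b' FF = f0 then 1 else 0) = (0::real)"
          using keyT[OF \<open>b' \<in> T\<close> bT, of FF] nl' that(2) unfolding f0_def by auto
      qed
      then show ?thesis by simp
    qed simp
    have self: "nu E w W b f0 = 1"
    proof -
      have fin: "finite (Pow (erased E w b))" using finEr by simp
      have "nu E w W b f0 = (-1) ^ card ({}::'a set) * (if f_mod E w W b {} = f0 then 1 else 0)
          + (\<Sum>FF\<in>Pow (erased E w b) - {{}}. (-1) ^ card FF * (if f_mod E w W b FF = f0 then 1 else 0))"
        unfolding nu_def by (rule sum.remove[OF fin]) simp
      also have "(\<Sum>FF\<in>Pow (erased E w b) - {{}}. (-1) ^ card FF * (if f_mod E w W b FF = f0 then 1 else 0)) = (0::real)"
      proof (rule sum.neutral, intro ballI)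
        fix FF assume "FF \<in> Pow (erased E w b) - {{}}"
        then show "(-1) ^ card FF * (if f_mod E w W b FF = f0 then 1 else 0) = (0::real)"
          using keyT[OF bT bT, of FF] ltr_irrefl[of E w b] unfolding f0_def by auto
      qed
      finally show ?thesis unfolding f0_def by simp
    qed
    have "(\<Sum>b'\<in>T. c b' * nu E w W b' f0) = c b * nu E w W b f0 + (\<Sum>b'\<in>T - {b}. c b' * nu E w W b' f0)"
      using sum.remove[OF finT bT] by simp
    also have "(\<Sum>b'\<in>T - {b}. c b' * nu E w W b' f0) = 0" using other by (intro sum.neutral) auto
    finally have "(\<Sum>b'\<in>T. c b' * nu E w W b' f0) = c b" using self by simp
    moreover have "(\<Sum>b'\<in>T. c b' * nu E w W b' f0) = 0" using H unfolding T_def by blast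
    ultimately show False using cb by simp
  qed
qed

end
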